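(* Let $\kappa > 3/2$ and $T_\mathrm{eff} > 0$ (temperatures in energy units, Boltzmann constant $k=1$), and set $T_0 = (\kappa - 3/2)\,T_\mathrm{eff}$. Let $f_\kappa$ be the kappa electron energy distribution on $E \in (0,\infty)$, $$f^{(\kappa)}_E(E) = \frac{2}{\sqrt{\pi}}\,\frac{\Gamma(\kappa+1)}{\Gamma(\kappa-\tfrac12)}\,T_0^{-3/2}\,\sqrt{E}\,\Bigl(1+\frac{E}{T_0}\Bigr)^{-(\kappa+1)},$$ with velocity-space analogue $f^{(\kappa)}_v(E) = f^{(\kappa)}_E(E)/\sqrt{E}$. Define the radio (source-function) temperature $T_B = \langle E^{-1/2}\rangle_{f_\kappa} / f^{(\kappa)}_v(0)$, where $\langle E^{-1/2}\rangle_{f_\kappa} = \int_0^\infty E^{-1/2} f^{(\kappa)}_E(E)\,dE$. Let $T_\mathrm{EUV} > 0$ be the EUV moment-matched temperature and define the correction $\varepsilon_\mathrm{EUV}$ by $T_\mathrm{EUV} = T_\mathrm{eff}\,(1+\varepsilon_\mathrm{EUV})$. Then $$R \equiv \frac{T_\mathrm{EUV}}{T_B} = \frac{\kappa}{\kappa - 3/2}\,\bigl(1+\varepsilon_\mathrm{EUV}\bigr).$$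
   Context: The distribution $f^{(\kappa)}_E$ is a probability density on $(0,\infty)$ whose mean energy is $\langle E\rangle = \tfrac32 T_\mathrm{eff}$ for every $\kappa>3/2$ (the "mean-energy" or Dzifčáková–Dudík convention). The quantity $T_B$ is the ratio of the moment $\langle 1/v\rangle \propto \langle E^{-1/2}\rangle$ (proportional to the low-frequency free-free emissivity) to $f_v(0)$ (proportional to the low-frequency free-free absorption coefficient), normalized so that for a Maxwellian energy density $\frac{2}{\sqrt\pi}T^{-3/2}\sqrt{E}e^{-E/T}$ it returns exactly $T$. The core temperature is $T_\mathrm{core} = \frac{\kappa-3/2}{\kappa}T_\mathrm{eff}$. *)

theory Defs
  imports "HOL-Analysis.Analysis"
begin

definition kappa_T0 :: "real \<Rightarrow> real \<Rightarrow> real" where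
  "kappa_T0 \<kappa> Teff = (\<kappa> - 3/2) * Teff"

definition kappa_fE :: "real \<Rightarrow> real \<Rightarrow> real \<Rightarrow> real" where
  "kappa_fE \<kappa> Teff E =
     2 / sqrt pi * (Gamma (\<kappa> + 1) / Gamma (\<kappa> - 1/2)) * kappa_T0 \<kappa> Teff powr (-3/2)
       * sqrt E * (1 + E / kappa_T0 \<kappa> Teff) powr (-(\<kappa> + 1))"

text \<open>Velocity-space analogue f_v = f_E / sqrt E, written out explicitly so that
  f_v(0) is the (continuous) value of the formula at E = 0.\<close>
definition kappa_fv :: "real \<Rightarrow> real \<Rightarrow> real \<Rightarrow> real" where
  "kappa_fv \<kappa> Teff E =
     2 / sqrt pi * (Gamma (\<kappa> + 1) / Gamma (\<kappa> - 1/2)) * kappa_T0 \<kappa> Teff powr (-3/2)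
       * (1 + E / kappa_T0 \<kappa> Teff) powr (-(\<kappa> + 1))"

definition kappa_mom_inv_sqrt :: "real \<Rightarrow> real \<Rightarrow> real" where
  "kappa_mom_inv_sqrt \<kappa> Teff =
     (\<integral>E\<in>{0<..}. E powr (-1/2) * kappa_fE \<kappa> Teff E \<partial>lborel)"

definition radio_TB :: "real \<Rightarrow> real \<Rightarrow> real" where
  "radio_TB \<kappa> Teff = kappa_mom_inv_sqrt \<kappa> Teff / kappa_fv \<kappa> Teff 0"

end

theory Submission
  imports Defs "HOL-Real_Asymp.Real_Asymp"
begin

lemma F_deriv:
  fixes T k x :: real assumes T: "T>0" and k: "k>0" and pos: "1 + x / T > 0"
 shows "((\<lambda>x::real. -(T / k) * (1 + x / T) powr (-k)) has_real_derivative (1 + x / T) powr (-(k + 1))) (at x)"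
proof -
  have h: "((\<lambda>x. 1 + x / T) has_real_derivative 1 / T) (at x)"
    using T by (auto intro!: derivative_eq_intros)
  have "((\<lambda>x::real. (1 + x / T) powr (-k)) has_real_derivative (-k) * (1 + x / T) powr (-k - of_nat 1) * (1 / T)) (at x)"
    by (rule DERIV_fun_powr[OF h pos])
  then have "((\<lambda>x::real. -(T / k) * (1 + x / T) powr (-k)) has_real_derivative -(T / k) * ((-k) * (1 + x / T) powr (-k - of_nat 1) * (1 / T))) (at x)"
    by (rule DERIV_cmult)
  moreover have "-(T / k) * ((-k) * X * (1 / T)) = X" for X
      using k T by (simp add: field_simps)
  moreover have "-k - of_nat 1 = -(k + 1)" by simp
  ultimately show ?thesis by metis
qed

lemma kappa_int:
  fixes k T :: real
  assumes k: "k > 0" and T: "T > 0"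
  shows "(\<integral>E\<in>{0<..}. (1 + E / T) powr (-(k + 1)) \<partial>lborel) = T / k"
proof -
  define F where "F = (\<lambda>x::real. -(T / k) * (1 + x / T) powr (-k))"
  have D: "DERIV F x :> (1 + x / T) powr (-(k + 1))" if "0 < ereal x" for x
  proof -
    have x: "x > 0" using that by simp
    have pos: "1 + x / T > 0" using x T by (simp add: add_pos_pos)
    show ?thesis unfolding F_def by (rule F_deriv[OF T k pos])
  qed
  have C: "isCont (\<lambda>x. (1 + x / T) powr (-(k + 1))) x" if "0 < ereal x" for x
  proof -
    have "1 + x / T > 0" using that T by (simp add: add_pos_pos)
    then show ?thesis using T by (auto intro!: continuous_intros)
  qed
  have A: "((F \<circ> real_of_ereal) \<longlongrightarrow> -(T / k)) (at_right 0)"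
  proof -
    have "isCont F 0" unfolding F_def using T k by (auto intro!: continuous_intros)
    then have "(F \<longlongrightarrow> F 0) (at 0)" by (simp add: isCont_def)
    then have "(F \<longlongrightarrow> F 0) (at_right 0)" by (rule filterlim_mono) (auto simp: at_le)
    moreover have "F 0 = -(T/k)" unfolding F_def by simp
    ultimately show ?thesis by (simp add: zero_ereal_def ereal_tendsto_simps)
  qed
  have B: "((F \<circ> real_of_ereal) \<longlongrightarrow> 0) (at_left \<infinity>)"
  proof -
    have "(F \<longlongrightarrow> 0) at_top"
      unfolding F_def using T k by real_asymp
    then show ?thesis by (simp add: ereal_tendsto_simps)
  qed
  have "(LBINT x=0..\<infinity>. (1 + x / T) powr (-(k + 1))) = 0 - (-(T / k))"
    by (rule interval_integral_FTC_nonneg(2)[OF _ D C _ A B]) auto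
  moreover have "einterval 0 \<infinity> = {0<..}"
    by (auto simp: einterval_def zero_ereal_def)
  ultimately show ?thesis
    by (simp add: interval_lebesgue_integral_def zero_ereal_def)
qed

theorem corollary1:
  fixes \<kappa> Teff TEUV \<epsilon>EUV :: real
  assumes "\<kappa> > 3/2" and "Teff > 0" and "TEUV > 0"
    and "TEUV = Teff * (1 + \<epsilon>EUV)"
  shows "TEUV / radio_TB \<kappa> Teff = \<kappa> / (\<kappa> - 3/2) * (1 + \<epsilon>EUV)"
proof -
  define T0 where "T0 = kappa_T0 \<kappa> Teff"
  have T0: "T0 > 0" using assms unfolding T0_def kappa_T0_def by simp
  define C where "C = 2 / sqrt pi * (Gamma (\<kappa> + 1) / Gamma (\<kappa> - 1/2)) * T0 powr (-3/2)"
  have Cpos: "C > 0" unfolding C_def using assms T0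
    by (auto intro!: divide_pos_pos mult_pos_pos Gamma_real_pos)
  have "kappa_mom_inv_sqrt \<kappa> Teff = (\<integral>E\<in>{0<..}. C * (1 + E / T0) powr (-(\<kappa> + 1)) \<partial>lborel)"
    unfolding kappa_mom_inv_sqrt_def
  proof (rule set_lebesgue_integral_cong, simp, intro allI impI)
    fix E :: real assume "E \<in> {0<..}"
    then have E: "E > 0" by simp
    have s: "sqrt E = E powr (1/2)" using E by (simp add: powr_half_sqrt)
    have "E powr (-1/2) * E powr (1/2) = E powr (-1/2 + 1/2)"
      by (rule powr_add[symmetric])
    then have e1: "E powr (-1/2) * sqrt E = 1" using E s by simp
    have f: "kappa_fE \<kappa> Teff E = C * sqrt E * (1 + E / T0) powr (-(\<kappa> + 1))"
      unfolding kappa_fE_def C_def T0_def by simp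
    show "E powr (-1/2) * kappa_fE \<kappa> Teff E = C * (1 + E / T0) powr (-(\<kappa> + 1))"
    proof -
      have "E powr (-1/2) * (C * sqrt E * (1 + E / T0) powr (-(\<kappa> + 1)))
          = C * (1 + E / T0) powr (-(\<kappa> + 1)) * (E powr (-1/2) * sqrt E)"
        by (simp only: ac_simps)
      then show ?thesis unfolding f using e1 by simp
    qed
  qed
  also have "\<dots> = C * (T0 / \<kappa>)"
    using kappa_int[of \<kappa> T0] assms T0 by (simp add: set_integral_mult_right)
  finally have M: "kappa_mom_inv_sqrt \<kappa> Teff = C * (T0 / \<kappa>)" .
  have V: "kappa_fv \<kappa> Teff 0 = C" unfolding kappa_fv_def C_def T0_def by simp
  have TB: "radio_TB \<kappa> Teff = T0 / \<kappa>"
    unfolding radio_TB_def M V using Cpos by simp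
  show ?thesis unfolding TB T0_def kappa_T0_def using assms
    by (simp add: field_simps)
qed

end
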